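(* Let $(X,\mathbb{A},d)$ be a forward complete $C^*$-algebra valued asymmetric metric space and let $T:X\to X$ be a forward $C^*$-valued contractive type mapping, i.e. there exist $x\in X$ and $a\in\mathbb{A}$ with $\|a\|<1$ such that $d(Ty,T^2y)\preceq a^*\,d(y,Ty)\,a$ for every $y\in\mathcal{O}_T(x)$. Then: (1) there exists $x_0\in X$ such that the sequence $\{T^nx\}_{n}$ forward converges to $x_0$ with respect to $\mathbb{A}$; (2) $x_0$ is a fixed point of $T$ if and only if the map $G:X\to\mathbb{A}$, $G(z)=d(z,Tz)$, is forward $T$-orbitally lower semicontinuous at $x_0$ with respect to $\mathbb{A}$.
   Context: $\mathbb{A}$ is a unital $C^*$-algebra with unit $I_{\mathbb{A}}$ and zero $0_{\mathbb{A}}$; $\mathbb{A}^+$ denotes its positive elements and, for self-adjoint $a,b$, $a\preceq b$ means $b-a\in\mathbb{A}^+$. $\epsilon\succ 0_{\mathbb{A}}$ means $\epsilon\in\mathbb{A}^+$ is invertible (equivalently $\epsilon\succeq\delta I_{\mathbb{A}}$ for some real $\delta>0$). A $C^*$-algebra valued asymmetric metric on a nonempty set $X$ is a map $d:X\times X\to\mathbb{A}$ such that (i) $0_{\mathbb{A}}\preceq d(x,y)$ for all $x,y$, and $d(x,y)=0_{\mathbb{A}}$ iff $x=y$; (ii) $d(x,y)\preceq d(x,z)+d(z,y)$ for all $x,y,z$ (symmetry not required); $(X,\mathbb{A},d)$ is then a $C^*$-algebra valued asymmetric metric space. A sequence $\{x_n\}$ forward converges to $x$ if for every $\epsilon\succ0_{\mathbb{A}}$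 there is $k$ with $d(x,x_n)\preceq\epsilon$ for all $n\ge k$. $\{x_n\}$ is forward Cauchy if for every $\epsilon\succ0_{\mathbb{A}}$ there is $k$ with $d(x_p,x_n)\preceq\epsilon$ for all $n>p\ge k$. $X$ is forward complete if every forward Cauchy sequence forward converges to some point of $X$. For $x\in X$, the orbit is $\mathcal{O}_T(x)=\{T^nx: n\in\mathbb{N}\}$. A function $G:X\to\mathbb{A}$ is forward $T$-orbitally lower semicontinuous at $x_0$ (with respect to $\mathbb{A}$) if for every sequence $\{x_n\}$ in $\mathcal{O}_T(x)$ that forward converges to $x_0$ one has $\|G(x_0)\|\le\liminf_{n\to\infty}\|G(x_n)\|$. *)

theory Defs
  imports "HOL-Analysis.Analysis"
begin

class cstar_algebra = real_normed_algebra_1 + complete_space +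
  fixes scaleC :: "complex \<Rightarrow> 'a \<Rightarrow> 'a"
    and adj :: "'a \<Rightarrow> 'a"
  assumes scaleC_add_right: "scaleC c (x + y) = scaleC c x + scaleC c y"
    and scaleC_add_left: "scaleC (c1 + c2) x = scaleC c1 x + scaleC c2 x"
    and scaleC_scaleC: "scaleC c1 (scaleC c2 x) = scaleC (c1 * c2) x"
    and scaleC_one: "scaleC 1 x = x"
    and scaleR_scaleC: "scaleR r x = scaleC (complex_of_real r) x"
    and norm_scaleC: "norm (scaleC c x) = cmod c * norm x"
    and scaleC_mult_left: "scaleC c x * y = scaleC c (x * y)"
    and scaleC_mult_right: "x * scaleC c y = scaleC c (x * y)"
    and adj_adj: "adj (adj x) = x"
    and adj_add: "adj (x + y) = adj x + adj y"
    and adj_scaleC: "adj (scaleC c x) = scaleC (cnj c) (adj x)"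
    and adj_mult: "adj (x * y) = adj y * adj x"
    and cstar_identity: "norm (adj x * x) = (norm x)\<^sup>2"

definition cpos :: "'a::cstar_algebra \<Rightarrow> bool" where
  "cpos a \<longleftrightarrow> (\<exists>b. a = adj b * b)"

definition cle :: "'a::cstar_algebra \<Rightarrow> 'a \<Rightarrow> bool" where
  "cle a b \<longleftrightarrow> cpos (b - a)"

definition cinvertible :: "'a::cstar_algebra \<Rightarrow> bool" where
  "cinvertible a \<longleftrightarrow> (\<exists>y. a * y = 1 \<and> y * a = 1)"

definition cgt0 :: "'a::cstar_algebra \<Rightarrow> bool" where
  "cgt0 e \<longleftrightarrow> cpos e \<and> cinvertible e"

definition casym_metric :: "('x \<Rightarrow> 'x \<Rightarrow> 'a::cstar_algebra) \<Rightarrow> bool" where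
  "casym_metric d \<longleftrightarrow>
     (\<forall>x y. cle 0 (d x y)) \<and> (\<forall>x y. d x y = 0 \<longleftrightarrow> x = y) \<and>
     (\<forall>x y z. cle (d x y) (d x z + d z y))"

definition fwd_converges :: "('x \<Rightarrow> 'x \<Rightarrow> 'a::cstar_algebra) \<Rightarrow> (nat \<Rightarrow> 'x) \<Rightarrow> 'x \<Rightarrow> bool" where
  "fwd_converges d xs x \<longleftrightarrow>
     (\<forall>e. cgt0 e \<longrightarrow> (\<exists>k. \<forall>n\<ge>k. cle (d x (xs n)) e))"

definition fwd_cauchy :: "('x \<Rightarrow> 'x \<Rightarrow> 'a::cstar_algebra) \<Rightarrow> (nat \<Rightarrow> 'x) \<Rightarrow> bool" where
  "fwd_cauchy d xs \<longleftrightarrow>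
     (\<forall>e. cgt0 e \<longrightarrow> (\<exists>k. \<forall>n p. k \<le> p \<and> p < n \<longrightarrow> cle (d (xs p) (xs n)) e))"

definition fwd_complete :: "('x \<Rightarrow> 'x \<Rightarrow> 'a::cstar_algebra) \<Rightarrow> bool" where
  "fwd_complete d \<longleftrightarrow> (\<forall>xs. fwd_cauchy d xs \<longrightarrow> (\<exists>x. fwd_converges d xs x))"

definition orbit :: "('x \<Rightarrow> 'x) \<Rightarrow> 'x \<Rightarrow> 'x set" where
  "orbit T x = {(T ^^ n) x | n. True}"

definition fwd_orbital_lsc ::
  "('x \<Rightarrow> 'x \<Rightarrow> 'a::cstar_algebra) \<Rightarrow> ('x \<Rightarrow> 'x) \<Rightarrow> 'x \<Rightarrow> ('x \<Rightarrow> 'a) \<Rightarrow> 'x \<Rightarrow> bool" where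
  "fwd_orbital_lsc d T x G x0 \<longleftrightarrow>
     (\<forall>xs. (\<forall>n. xs n \<in> orbit T x) \<longrightarrow> fwd_converges d xs x0 \<longrightarrow>
        ereal (norm (G x0)) \<le> liminf (\<lambda>n. ereal (norm (G (xs n)))))"

end

theory Submission
  imports Defs "HOL-Computational_Algebra.Formal_Power_Series"
begin


section \<open>Coefficients of the square root series\<close>

definition sc :: "nat \<Rightarrow> real" where
  "sc j = (-1)^j * ((1/2::real) gchoose j)"

definition sP :: "nat \<Rightarrow> real" where
  "sP n = ((real n - 1/2) gchoose n)"

lemma sc_partial: "(\<Sum>j\<le>n. sc j) = sP n"
proof -
  have "(\<Sum>j\<le>n. sc j) = (\<Sum>j\<le>n. ((1/2::real) gchoose j) * (-1)^j)"
    by (simp add: sc_def mult.commute)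
  also have "\<dots> = (-1)^n * ((1/2 - 1::real) gchoose n)"
    by (rule gbinomial_sum_lower_neg)
  also have "((1/2 - 1::real) gchoose n) = (-1)^n * ((real n - 1/2) gchoose n)"
    using gbinomial_negated_upper[of "1/2 - 1::real" n] by simp
  finally show ?thesis by (simp add: sP_def flip: power_mult_distrib)
qed

lemma sP_0: "sP 0 = 1" by (simp add: sP_def)

lemma sP_Suc: "sP (Suc n) = sP n * ((real n + 1/2) / real (Suc n))"
proof -
  have "sP (Suc n) = (((real n - 1/2) + 1) gchoose Suc n)"
    by (simp add: sP_def algebra_simps)
  also have "\<dots> = ((real n - 1/2) gchoose n) * (((real n - 1/2) + 1) / of_nat (Suc n))"
    by (rule gbinomial_rec)
  finally show ?thesis by (simp add: sP_def algebra_simps)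
qed

lemma sP_nonneg: "0 \<le> sP n"
  by (induction n) (auto simp: sP_0 sP_Suc)

lemma sP_le1: "sP (Suc n) \<le> sP n"
proof -
  have "(real n + 1/2) / real (Suc n) \<le> 1" by (simp add: field_simps)
  from mult_left_mono[OF this sP_nonneg[of n]] show ?thesis unfolding sP_Suc by simp
qed

lemma sc_0: "sc 0 = 1" by (simp add: sc_def)

lemma sc_Suc: "sc (Suc n) = sP (Suc n) - sP n"
proof -
  have "sP (Suc n) = sP n + sc (Suc n)" by (simp only: sc_partial[symmetric] sum.atMost_Suc)
  then show ?thesis by linarith
qed

lemma sc_Suc_nonpos: "sc (Suc n) \<le> 0"
  using sP_le1[of n] by (simp add: sc_Suc)

lemma sP_le_1: "sP n \<le> 1"
  by (induction n) (auto simp: sP_0 intro: order_trans[OF sP_le1])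

lemma tail_partial: "(\<Sum>j<n. - sc (Suc j)) = 1 - sP n"
  by (induction n) (simp_all add: sc_Suc sP_0)

lemma abs_sc_partial: "(\<Sum>j<n. \<bar>sc j\<bar>) \<le> 2"
proof (cases n)
  case 0 then show ?thesis by simp
next
  case (Suc m)
  have "(\<Sum>j<Suc m. \<bar>sc j\<bar>) = \<bar>sc 0\<bar> + (\<Sum>j<m. \<bar>sc (Suc j)\<bar>)"
    by (subst sum.lessThan_Suc_shift) simp
  also have "(\<Sum>j<m. \<bar>sc (Suc j)\<bar>) = (\<Sum>j<m. - sc (Suc j))"
    using sc_Suc_nonpos by (intro sum.cong) (auto simp: abs_of_nonpos)
  finally show ?thesis using Suc tail_partial[of m] sP_nonneg[of m] by (simp add: sc_0)
qed

lemma summable_abs_sc: "summable (\<lambda>j. \<bar>sc j\<bar>)"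
  by (rule summableI_nonneg_bounded[where x=2]) (auto intro: abs_sc_partial)

lemma summable_tail: "summable (\<lambda>j. - sc (Suc j))"
proof -
  have "summable (\<lambda>j. \<bar>sc (Suc j)\<bar>)" using summable_abs_sc by (subst summable_Suc_iff)
  moreover have "(\<lambda>j. - sc (Suc j)) = (\<lambda>j. \<bar>sc (Suc j)\<bar>)"
    using sc_Suc_nonpos by (auto simp: abs_of_nonpos)
  ultimately show ?thesis by simp
qed

lemma tail_le1: "(\<Sum>j. - sc (Suc j)) \<le> 1"
  by (rule suminf_le_const[OF summable_tail]) (use tail_partial sP_nonneg in auto)

lemma sc_conv: "(\<Sum>i\<le>n. sc i * sc (n - i)) = (if n = 0 then 1 else if n = 1 then -1 else 0)"
proof -
  have "(\<Sum>i\<le>n. sc i * sc (n - i)) = (\<Sum>i\<le>n. (-1)^n * (((1/2::real) gchoose i) * ((1/2) gchoose (n - i))))"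
    by (intro sum.cong) (auto simp: sc_def power_add[symmetric])
  also have "\<dots> = (-1)^n * (\<Sum>i=0..n. ((1/2::real) gchoose i) * ((1/2) gchoose (n - i)))"
    by (simp add: sum_distrib_left atMost_atLeast0)
  also have "\<dots> = (-1)^n * ((1/2 + 1/2::real) gchoose n)"
    by (simp only: gbinomial_Vandermonde)
  also have "((1/2 + 1/2::real) gchoose n) = of_nat (1 choose n)"
    using binomial_gbinomial[of 1 n, where 'a=real] by simp
  finally show ?thesis
    by (cases n) (auto simp: binomial_eq_0)
qed



context cstar_algebra begin
subclass banach ..
end

context
begin

lemma adj_zero[simp]: "adj (0::'a::cstar_algebra) = 0"
  using adj_add[of "0::'a" 0] by simp

lemma adj_minus[simp]: "adj (- x) = - adj (x::'a::cstar_algebra)"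
  using minus_unique[of "adj x" "adj (-x)"] adj_add[of x "-x"] by simp

lemma adj_diff[simp]: "adj (x - y) = adj x - adj (y::'a::cstar_algebra)"
  using adj_add[of x "-y"] by simp

lemma adj_one[simp]: "adj (1::'a::cstar_algebra) = 1"
proof -
  have "adj (adj 1 * (1::'a)) = adj 1 * adj (adj 1)" by (rule adj_mult)
  then show ?thesis by (simp add: adj_adj)
qed

lemma adj_scaleR[simp]: "adj (r *\<^sub>R x) = r *\<^sub>R adj (x::'a::cstar_algebra)"
  by (simp add: scaleR_scaleC adj_scaleC)

lemma adj_of_real[simp]: "adj (of_real r :: 'a::cstar_algebra) = of_real r"
  by (simp add: of_real_def)

lemma adj_power: "adj (x ^ n) = (adj x) ^ n" for x :: "'a::cstar_algebra"
  by (induction n) (simp_all add: adj_mult power_commutes)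

lemma norm_adj[simp]: "norm (adj x) = norm (x::'a::cstar_algebra)"
proof -
  have le: "norm y \<le> norm (adj y)" for y :: 'a
  proof (cases "y = 0")
    case False
    have "(norm y)^2 = norm (adj y * y)" by (simp add: cstar_identity)
    also have "\<dots> \<le> norm (adj y) * norm y" by (rule norm_mult_ineq)
    finally show ?thesis using False by (simp add: power2_eq_square)
  qed simp
  show ?thesis using le[of x] le[of "adj x"] by (simp add: adj_adj)
qed

lemma adj_sum: "adj (sum f A) = sum (\<lambda>i. adj (f i)) A" for f :: "_ \<Rightarrow> 'a::cstar_algebra"
  by (induction A rule: infinite_finite_induct) (simp_all add: adj_add)

lemma bounded_linear_adj: "bounded_linear (adj :: 'a::cstar_algebra \<Rightarrow> 'a)"
  by (rule bounded_linear_intro[where K=1]) (simp_all add: adj_add)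

lemma adj_suminf: "summable f \<Longrightarrow> adj (suminf f) = (\<Sum>n. adj (f n))" for f :: "nat \<Rightarrow> 'a::cstar_algebra"
  by (rule bounded_linear.suminf[OF bounded_linear_adj])

lemma cstar_sa: "adj h = h \<Longrightarrow> norm (h * h) = (norm h)^2" for h :: "'a::cstar_algebra"
  using cstar_identity[of h] by simp

lemma cstar_sa_pow2: "adj h = h \<Longrightarrow> norm (h ^ (2^n)) = (norm h)^(2^n)" for h :: "'a::cstar_algebra"
proof (induction n)
  case (Suc n)
  have sa: "adj (h ^ (2^n)) = h ^ (2^n)" using Suc.prems by (simp add: adj_power)
  have "h ^ (2 ^ Suc n) = h^(2^n) * h^(2^n)" by (simp add: power_add[symmetric] mult_2)
  then have "norm (h ^ (2 ^ Suc n)) = (norm (h ^ (2^n)))^2" using cstar_sa[OF sa] by simp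
  then show ?case using Suc by (simp add: power_mult[symmetric] mult.commute)
qed simp

end

section \<open>Neumann series\<close>

lemma neumann:
  fixes y :: "'a::cstar_algebra"
  assumes "norm y < 1"
  shows "\<exists>v. (1 - y) * v = 1 \<and> v * (1 - y) = 1 \<and> norm v \<le> 1 / (1 - norm y) \<and>
             (\<forall>z. z * y = y * z \<longrightarrow> z * v = v * z)"
proof -
  have nb: "norm (y ^ n) \<le> norm y ^ n" for n by (rule norm_power_ineq)
  have sg: "summable (\<lambda>n. norm y ^ n)" using assms by (simp add: summable_geometric)
  have sn: "summable (\<lambda>n. norm (y ^ n))"
    by (rule summable_comparison_test[OF _ sg]) (use nb in auto)
  then have s: "summable (\<lambda>n. y ^ n)" by (rule summable_norm_cancel)
  define v where "v = (\<Sum>n. y ^ n)"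
  have y0: "(\<lambda>n. y ^ n) \<longlonglongrightarrow> 0" using s by (rule summable_LIMSEQ_zero)
  have tel: "(\<lambda>n. y ^ n - y ^ Suc n) sums (1 - 0)"
  proof -
    have "(\<lambda>n. y ^ Suc n - y ^ n) sums (0 - y ^ 0)"
      by (rule telescope_sums[OF y0])
    from sums_minus[OF this] show ?thesis by simp
  qed
  have e1: "(1 - y) * v = 1"
  proof -
    have "(\<lambda>n. (1 - y) * y ^ n) sums ((1 - y) * v)"
      unfolding v_def by (rule sums_mult[OF summable_sums[OF s]])
    moreover have "(\<lambda>n. (1 - y) * y ^ n) = (\<lambda>n. y ^ n - y ^ Suc n)"
      by (simp add: algebra_simps)
    ultimately show ?thesis using tel sums_unique2 by fastforce
  qed
  have e2: "v * (1 - y) = 1"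
  proof -
    have "(\<lambda>n. y ^ n * (1 - y)) sums (v * (1 - y))"
      unfolding v_def by (rule sums_mult2[OF summable_sums[OF s]])
    moreover have "(\<lambda>n. y ^ n * (1 - y)) = (\<lambda>n. y ^ n - y ^ Suc n)"
      by (simp add: algebra_simps power_commutes)
    ultimately show ?thesis using tel sums_unique2 by fastforce
  qed
  have "norm v \<le> (\<Sum>n. norm (y ^ n))" unfolding v_def by (rule summable_norm[OF sn])
  also have "\<dots> \<le> (\<Sum>n. norm y ^ n)" by (rule suminf_le[OF nb sn sg])
  also have "\<dots> = 1 / (1 - norm y)" using assms by (simp add: suminf_geometric)
  finally have nv: "norm v \<le> 1 / (1 - norm y)" .
  have comm: "z * v = v * z" if "z * y = y * z" for z
  proof -
    have p: "z * y ^ n = y ^ n * z" for n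
    proof (induction n)
      case (Suc n)
      then show ?case by (metis mult.assoc power_Suc2 that)
    qed simp
    have "z * v = (\<Sum>n. z * y ^ n)" unfolding v_def by (rule suminf_mult[OF s, symmetric])
    also have "\<dots> = (\<Sum>n. y ^ n * z)" by (simp add: p)
    also have "\<dots> = v * z" unfolding v_def by (rule suminf_mult2[OF s, symmetric])
    finally show ?thesis .
  qed
  show ?thesis using e1 e2 nv comm by blast
qed



lemma commute_power: "z * k = k * z \<Longrightarrow> z * k ^ n = k ^ n * z" for z k :: "'a::monoid_mult"
proof (induction n)
  case (Suc n)
  then show ?case by (metis mult.assoc power_Suc2)
qed simp

lemma sqrt_series:
  fixes k :: "'a::cstar_algebra"
  assumes sa: "adj k = k" and nk: "norm k \<le> 1"
  shows "\<exists>s. adj s = s \<and> s * s = 1 - k \<and> norm (1 - s) \<le> 1 \<and> (\<forall>z. z * k = k * z \<longrightarrow> z * s = s * z)"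
proof -
  define a where "a j = sc j *\<^sub>R k ^ j" for j
  have pk: "norm (k ^ j) \<le> 1" for j
    using norm_power_ineq[of k j] power_le_one[OF norm_ge_zero nk, of j] by linarith
  have na: "norm (a j) \<le> \<bar>sc j\<bar>" for j
    using pk[of j] by (simp add: a_def mult_left_le)
  have sna: "summable (\<lambda>j. norm (a j))"
    by (rule summable_comparison_test[OF _ summable_abs_sc]) (use na in auto)
  have sa_: "summable a" using sna by (rule summable_norm_cancel)
  define s where "s = suminf a"
  have adjs: "adj s = s"
  proof -
    have "(\<lambda>n. adj (a n)) = a" by (auto simp: a_def adj_power sa)
    then show ?thesis unfolding s_def using adj_suminf[OF sa_] by simp
  qed
  have prod: "a i * a (n - i) = (sc i * sc (n - i)) *\<^sub>R k ^ n" if "i \<le> n" for i n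
  proof -
    have "a i * a (n - i) = (sc i * sc (n - i)) *\<^sub>R (k ^ i * k ^ (n - i))"
      by (simp add: a_def)
    also have "k ^ i * k ^ (n - i) = k ^ n" using that by (simp add: power_add[symmetric])
    finally show ?thesis .
  qed
  have "s * s = (\<Sum>n. \<Sum>i\<le>n. a i * a (n - i))"
    unfolding s_def by (rule Cauchy_product[OF sna sna])
  also have "\<dots> = (\<Sum>n. (\<Sum>i\<le>n. sc i * sc (n - i)) *\<^sub>R k ^ n)"
    by (simp add: prod scaleR_sum_left)
  also have "\<dots> = (\<Sum>n. (if n = 0 then 1 else if n = 1 then -1 else 0) *\<^sub>R k ^ n)"
    by (simp only: sc_conv)
  also have "\<dots> = (\<Sum>n\<in>{0,1}. (if n = 0 then 1 else if n = 1 then -1 else 0) *\<^sub>R k ^ n)"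
    by (rule suminf_finite) auto
  also have "\<dots> = 1 - k" by simp
  finally have ss: "s * s = 1 - k" .
  have snS: "summable (\<lambda>j. norm (a (Suc j)))" using sna by (subst summable_Suc_iff)
  have "(\<Sum>j. a (Suc j)) = s - a 0" unfolding s_def by (rule suminf_split_head[OF sa_])
  then have "1 - s = - (\<Sum>j. a (Suc j))" by (simp add: a_def sc_0)
  then have "norm (1 - s) = norm (\<Sum>j. a (Suc j))" by simp
  also have "\<dots> \<le> (\<Sum>j. norm (a (Suc j)))" by (rule summable_norm[OF snS])
  also have "\<dots> \<le> (\<Sum>j. - sc (Suc j))"
  proof (rule suminf_le[OF _ snS summable_tail])
    fix j show "norm (a (Suc j)) \<le> - sc (Suc j)"
      using na[of "Suc j"] sc_Suc_nonpos[of j] by simp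
  qed
  also have "\<dots> \<le> 1" by (rule tail_le1)
  finally have n1: "norm (1 - s) \<le> 1" .
  have comm: "z * s = s * z" if "z * k = k * z" for z
  proof -
    have "z * s = (\<Sum>j. z * a j)" unfolding s_def by (rule suminf_mult[OF sa_, symmetric])
    also have "\<dots> = (\<Sum>j. a j * z)"
      by (simp add: a_def commute_power[OF that])
    also have "\<dots> = s * z" unfolding s_def by (rule suminf_mult2[OF sa_, symmetric])
    finally show ?thesis .
  qed
  show ?thesis using adjs ss n1 comm by blast
qed



definition J :: "'a::cstar_algebra \<Rightarrow> 'a" where "J x = scaleC \<i> x"

lemma scaleC_minus1: "scaleC (-1) x = - (x::'a::cstar_algebra)"
  using scaleR_scaleC[of "-1" x] by simp

lemma scaleC_zero: "scaleC c (0::'a::cstar_algebra) = 0"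
  using scaleC_add_right[of c "0::'a" 0] by simp

lemma scaleC_neg: "scaleC c (- x) = - scaleC c (x::'a::cstar_algebra)"
  using scaleC_add_right[of c x "-x"] scaleC_zero[of c] minus_unique by (metis add.right_inverse)

lemma J_J: "J (J x) = - x"
  by (simp add: J_def scaleC_scaleC scaleC_minus1)

lemma J_add: "J (x + y) = J x + J y" by (simp add: J_def scaleC_add_right)
lemma J_minus: "J (- x) = - J x" by (simp add: J_def scaleC_neg)
lemma J_diff: "J (x - y) = J x - J y" using J_add[of x "-y"] J_minus[of y] by simp
lemma J_mult_left: "J x * y = J (x * y)" by (simp add: J_def scaleC_mult_left)
lemma J_mult_right: "x * J y = J (x * y)" by (simp add: J_def scaleC_mult_right)
lemma adj_J: "adj (J x) = - J (adj x)"
proof -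
  have "adj (J x) = scaleC (- \<i>) (adj x)" by (simp add: J_def adj_scaleC)
  also have "\<dots> = - J (adj x)"
    using scaleC_scaleC[of "-1" \<i> "adj x"] by (simp add: J_def scaleC_minus1)
  finally show ?thesis .
qed
lemma norm_J[simp]: "norm (J x) = norm x" by (simp add: J_def norm_scaleC)

section \<open>The norm-positive cone\<close>

definition posc :: "'a::cstar_algebra \<Rightarrow> bool" where
  "posc h \<longleftrightarrow> adj h = h \<and> (\<exists>t\<ge>0. norm (of_real t - h) \<le> t)"

lemma posc_sa: "posc h \<Longrightarrow> adj h = h" by (simp add: posc_def)

lemma posc_0: "posc 0" by (auto simp: posc_def)

lemma posc_add: "posc a \<Longrightarrow> posc b \<Longrightarrow> posc (a + b)"
proof -
  assume a: "posc a" and b: "posc b"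
  then obtain t1 t2 where t: "t1 \<ge> 0" "norm (of_real t1 - a) \<le> t1" "t2 \<ge> 0" "norm (of_real t2 - b) \<le> t2"
    by (auto simp: posc_def)
  have "of_real (t1 + t2) - (a + b) = (of_real t1 - a) + (of_real t2 - b)"
    by (simp add: algebra_simps)
  then have "norm (of_real (t1 + t2) - (a + b)) \<le> t1 + t2"
    unfolding \<open>of_real (t1 + t2) - (a + b) = _\<close>
    using norm_triangle_ineq[of "of_real t1 - a" "of_real t2 - b"] t by linarith
  then show ?thesis using a b t by (auto simp: posc_def adj_add intro!: exI[of _ "t1+t2"])
qed

lemma posc_scaleR: "posc a \<Longrightarrow> c \<ge> 0 \<Longrightarrow> posc (c *\<^sub>R a)"
proof -
  assume a: "posc a" and c: "c \<ge> 0"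
  then obtain t where t: "t \<ge> 0" "norm (of_real t - a) \<le> t" by (auto simp: posc_def)
  have "of_real (c * t) - c *\<^sub>R a = c *\<^sub>R (of_real t - a)"
    by (simp add: scaleR_diff_right of_real_def)
  then have "norm (of_real (c * t) - c *\<^sub>R a) \<le> c * t"
    using t c by (simp add: mult_left_mono)
  then show ?thesis using a t c by (auto simp: posc_def intro!: exI[of _ "c*t"])
qed

lemma posc_of_real: "t \<ge> 0 \<Longrightarrow> posc (of_real t :: 'a::cstar_algebra)"
  by (auto simp: posc_def intro!: exI[of _ t])

lemma sqrt_posc:
  fixes y :: "'a::cstar_algebra"
  assumes "posc y"
  shows "\<exists>w. posc w \<and> w * w = y \<and> (\<forall>z. z * y = y * z \<longrightarrow> z * w = w * z)"
proof -
  obtain t where t: "t \<ge> 0" "norm (of_real t - y) \<le> t" and sa: "adj y = y"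
    using assms by (auto simp: posc_def)
  show ?thesis
  proof (cases "t = 0")
    case True
    then have "y = 0" using t by simp
    then show ?thesis using posc_0 by (intro exI[of _ 0]) auto
  next
    case False
    then have tp: "t > 0" using t by simp
    define k where "k = (1/t) *\<^sub>R (of_real t - y)"
    have sak: "adj k = k" by (simp add: k_def sa)
    have nk: "norm k \<le> 1" using t tp by (simp add: k_def divide_le_eq)
    obtain s where s: "adj s = s" "s * s = 1 - k" "norm (1 - s) \<le> 1"
      "\<And>z. z * k = k * z \<Longrightarrow> z * s = s * z"
      using sqrt_series[OF sak nk] by blast
    define w where "w = sqrt t *\<^sub>R s"
    have "w * w = t *\<^sub>R (s * s)" using t by (simp add: w_def)
    also have "\<dots> = t *\<^sub>R (1 - k)" by (simp add: s)
    also have "\<dots> = y" using tp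
      by (simp add: k_def scaleR_diff_right of_real_def)
    finally have ww: "w * w = y" .
    have "of_real (sqrt t) - w = sqrt t *\<^sub>R (1 - s)"
      by (simp add: w_def scaleR_diff_right of_real_def)
    then have "norm (of_real (sqrt t) - w) \<le> sqrt t"
      using s(3) t by (simp add: mult_left_le)
    then have pw: "posc w" using s(1) t(1) by (auto simp: posc_def w_def intro!: exI[of _ "sqrt t"])
    have cw: "z * w = w * z" if "z * y = y * z" for z
    proof -
      have "z * k = k * z" using that
        by (simp add: k_def algebra_simps of_real_def)
      then show ?thesis using s(4) by (simp add: w_def)
    qed
    show ?thesis using pw ww cw by blast
  qed
qed

lemma posc_sqrt_sa: "posc y \<Longrightarrow> \<exists>w. adj w = w \<and> w * w = y"
  using sqrt_posc posc_sa by blast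

section \<open>Squares of self-adjoint elements\<close>

lemma unit_square_bound:
  fixes g :: "'a::cstar_algebra"
  assumes sa: "adj g = g" and ng: "norm g \<le> 1"
  shows "norm (1 - g * g) \<le> 1"
proof -
  have sam: "adj (-g) = -g" using sa by simp
  have nm: "norm (-g) \<le> 1" using ng by simp
  obtain s where s: "adj s = s" "s * s = 1 - g" "\<And>z. z * g = g * z \<Longrightarrow> z * s = s * z"
    using sqrt_series[OF sa ng] by blast
  obtain r where r: "adj r = r" "r * r = 1 - - g" "\<And>z. z * - g = - g * z \<Longrightarrow> z * r = r * z"
    using sqrt_series[OF sam nm] by blast
  have sg: "s * g = g * s" using s(3)[of g] by simp
  have sr: "s * r = r * s" using r(3)[of s] sg by simp
  have rg: "r * g = g * r" using r(3)[of g] by simp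
  define w where "w = s * r"
  have saw: "adj w = w" using s(1) r(1) sr by (simp add: w_def adj_mult)
  have wg: "w * g = g * w"
  proof -
    have "w * g = s * (r * g)" by (simp add: w_def mult.assoc)
    also have "\<dots> = (s * g) * r" by (simp add: rg mult.assoc)
    also have "\<dots> = g * w" by (simp add: sg w_def mult.assoc)
    finally show ?thesis .
  qed
  have ww: "w * w = 1 - g * g"
  proof -
    have "w * w = s * (r * s) * r" by (simp add: w_def mult.assoc)
    also have "\<dots> = s * (s * r) * r" by (simp only: sr)
    also have "\<dots> = (s * s) * (r * r)" by (simp only: mult.assoc)
    also have "\<dots> = (1 - g) * (1 + g)" using s(2) r(2) by simp
    also have "\<dots> = 1 - g * g" by (simp add: algebra_simps)
    finally show ?thesis .
  qed
  define u where "u = g + J w"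
  have adju: "adj u = g - J w" by (simp add: u_def adj_add adj_J sa saw)
  have uu: "adj u * u = 1"
  proof -
    have "adj u * u = (g - J w) * (g + J w)" unfolding adju by (simp add: u_def)
    also have "\<dots> = g * g + g * J w - J w * g - J w * J w" by (simp add: algebra_simps)
    also have "\<dots> = g * g + J (g * w) - J (w * g) - J (J (w * w))"
      by (simp only: J_mult_left J_mult_right)
    also have "\<dots> = 1" by (simp add: wg J_J ww)
    finally show ?thesis .
  qed
  have nu: "norm u = 1"
  proof -
    have "(norm u)^2 = 1" using cstar_identity[of u] uu by simp
    then show ?thesis using norm_ge_zero[of u] by (simp add: power2_eq_1_iff)
  qed
  define X where "X = 1 - g * g"
  have gX: "g * g = 1 - X" by (simp add: X_def)
  have id: "X + X + X + X = (1 + 1) - u * u - adj u * adj u"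
  proof -
    have "u * u + adj u * adj u = (g + J w) * (g + J w) + (g - J w) * (g - J w)" unfolding adju by (simp add: u_def)
    also have "\<dots> = (g * g + g * g) + (J w * J w + J w * J w)" by (simp add: algebra_simps)
    also have "J w * J w = - (w * w)" by (simp only: J_mult_left J_mult_right J_J)
    finally have "u * u + adj u * adj u = (1 - X) + (1 - X) - X - X" by (simp add: ww gX)
    then show ?thesis by (simp add: algebra_simps)
  qed
  have four: "(4::real) *\<^sub>R X = X + X + X + X"
  proof -
    have "(4::real) *\<^sub>R X = (2::real) *\<^sub>R X + (2::real) *\<^sub>R X" by (simp flip: scaleR_add_left)
    then show ?thesis by (simp add: scaleR_2 add.assoc)
  qed
  have "norm ((1 + 1) - u * u - adj u * adj u) \<le> norm (1 + 1::'a) + norm (u * u) + norm (adj u * adj u)"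
    using norm_triangle_ineq4[of "(1 + 1) - u * u" "adj u * adj u"] norm_triangle_ineq4[of "1 + 1::'a" "u * u"] by linarith
  also have "\<dots> \<le> 2 + 1 + 1"
    using norm_mult_ineq[of u u] norm_mult_ineq[of "adj u" "adj u"] nu norm_triangle_ineq[of "1::'a" 1] by simp
  finally have "norm ((4::real) *\<^sub>R X) \<le> 4" using id four by simp
  then show ?thesis by (simp add: X_def)
qed

lemma sa_square_bound:
  fixes h :: "'a::cstar_algebra"
  assumes sa: "adj h = h"
  shows "norm (of_real ((norm h)^2) - h * h) \<le> (norm h)^2"
proof (cases "h = 0")
  case False
  then have np: "norm h > 0" by simp
  define g where "g = (1 / norm h) *\<^sub>R h"
  have "adj g = g" by (simp add: g_def sa)
  moreover have "norm g \<le> 1" using np by (simp add: g_def)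
  ultimately have b: "norm (1 - g * g) \<le> 1" by (rule unit_square_bound)
  have "of_real ((norm h)^2) - h * h = (norm h)^2 *\<^sub>R (1 - g * g)"
    using np by (simp add: g_def scaleR_diff_right of_real_def power2_eq_square)
  then show ?thesis using b by (simp add: mult_left_le)
qed simp

lemma sq_posc: "adj h = h \<Longrightarrow> posc (h * h)"
  using sa_square_bound[of h] by (auto simp: posc_def adj_mult intro!: exI[of _ "(norm h)^2"])

lemma posc_normchar: "posc y \<Longrightarrow> norm (of_real (norm y) - y) \<le> norm y"
proof -
  assume "posc y"
  then obtain w where w: "adj w = w" "w * w = y" using posc_sqrt_sa by blast
  have "norm y = (norm w)^2" using cstar_sa[OF w(1)] w(2) by simp
  then show ?thesis using sa_square_bound[OF w(1)] w(2) by simp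
qed

lemma posc_iff: "posc y \<longleftrightarrow> adj y = y \<and> norm (of_real (norm y) - y) \<le> norm y"
proof
  assume "adj y = y \<and> norm (of_real (norm y) - y) \<le> norm y"
  then show "posc y" unfolding posc_def using norm_ge_zero[of y] by blast
qed (use posc_normchar posc_sa in blast)



lemma inv_lr: "x * m = 1 \<Longrightarrow> m' * x = 1 \<Longrightarrow> m' = (m::'a::monoid_mult)"
  by (metis mult.assoc mult_1_left mult_1_right)

lemma one_neq_zero_cstar: "(1::'a::cstar_algebra) \<noteq> 0"
  using norm_one[where 'a='a] by auto

lemma of_real_comm: "z * of_real t = of_real t * (z::'a::cstar_algebra)"
  by (simp add: of_real_def)

lemma adj_inverse: "adj y = y \<Longrightarrow> y * m = 1 \<Longrightarrow> m * y = 1 \<Longrightarrow> adj m = (m::'a::cstar_algebra)"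
proof -
  assume a: "adj y = y" "y * m = 1" "m * y = 1"
  have "adj m * y = 1" using adj_mult[of y m] a by simp
  then show ?thesis using inv_lr[OF a(2)] by blast
qed

lemma posc_plus_inv:
  fixes y :: "'a::cstar_algebra"
  assumes py: "posc y" and lp: "l > 0"
  shows "\<exists>m. (y + of_real l) * m = 1 \<and> m * (y + of_real l) = 1 \<and> norm m \<le> 1 / l \<and>
             (\<forall>z. z * y = y * z \<longrightarrow> z * m = m * z)"
proof -
  obtain t where t: "t \<ge> 0" "norm (of_real t - y) \<le> t" using py by (auto simp: posc_def)
  define q where "q = (1 / (t + l)) *\<^sub>R (of_real t - y)"
  have tl: "t + l > 0" using t lp by simp
  have nq: "norm q \<le> t / (t + l)" using t tl by (simp add: q_def divide_right_mono)
  also have "\<dots> < 1" using lp tl by simp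
  finally have nq1: "norm q < 1" .
  obtain v where v: "(1 - q) * v = 1" "v * (1 - q) = 1" "norm v \<le> 1 / (1 - norm q)"
    "\<And>z. z * q = q * z \<Longrightarrow> z * v = v * z"
    using neumann[OF nq1] by blast
  have tq: "(t + l) *\<^sub>R q = of_real t - y" using tl by (simp add: q_def)
  have "(t + l) *\<^sub>R (1 - q) = (t + l) *\<^sub>R 1 - (of_real t - y)"
    by (simp only: scaleR_diff_right tq)
  also have "\<dots> = y + of_real l" by (simp add: of_real_def scaleR_add_left)
  finally have yl: "y + of_real l = (t + l) *\<^sub>R (1 - q)" by simp
  define m where "m = (1 / (t + l)) *\<^sub>R v"
  have m1: "(y + of_real l) * m = 1" using v(1) tl by (simp add: yl m_def)
  have m2: "m * (y + of_real l) = 1" using v(2) tl by (simp add: yl m_def)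
  have "1 - norm q \<ge> l / (t + l)" using nq tl by (simp add: field_simps)
  then have "1 / (1 - norm q) \<le> 1 / (l / (t + l))"
  proof (rule divide_left_mono)
    show "0 < (1 - norm q) * (l / (t + l))" using nq1 lp tl by simp
  qed (use lp tl in auto)
  then have "norm v \<le> (t + l) / l" using v(3) by simp
  then have "norm v / (t + l) \<le> ((t + l) / l) / (t + l)"
    by (rule divide_right_mono) (use tl in simp)
  also have "((t + l) / l) / (t + l) = 1 / l" using tl by simp
  finally have nm: "norm m \<le> 1 / l" using tl by (simp add: m_def)
  have cm: "z * m = m * z" if "z * y = y * z" for z
  proof -
    have "z * q = q * z" using that by (simp add: q_def algebra_simps of_real_comm)
    then show ?thesis using v(4) by (simp add: m_def)
  qed
  show ?thesis using m1 m2 nm cm by blast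
qed

lemma posc_inv_gap:
  fixes y :: "'a::cstar_algebra"
  assumes py: "posc y" and m: "y * m = 1" "m * y = 1"
  shows "m \<noteq> 0 \<and> posc (y - of_real (1 / norm m))"
proof -
  have m0: "m \<noteq> 0" using m one_neq_zero_cstar by force
  obtain g where g: "posc g" "g * g = y" "\<And>z. z * y = y * z \<Longrightarrow> z * g = g * z"
    using sqrt_posc[OF py] by blast
  have gm: "m * g = g * m" using g(3)[of m] m by simp
  have am: "adj m = m" using adj_inverse[OF posc_sa[OF py] m] .
  define d where "d = 1 / norm m"
  define k where "k = d *\<^sub>R m"
  have sak: "adj k = k" by (simp add: k_def am)
  have nk: "norm k \<le> 1" using m0 by (simp add: k_def d_def)
  obtain r where r: "adj r = r" "r * r = 1 - k" "\<And>z. z * k = k * z \<Longrightarrow> z * r = r * z"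
    using sqrt_series[OF sak nk] by blast
  have gr: "g * r = r * g" using r(3)[of g] gm by (simp add: k_def)
  have "(g * r) * (g * r) = (g * g) * (r * r)" by (metis gr mult.assoc)
  also have "\<dots> = y - d *\<^sub>R (y * m)" by (simp add: g(2) r(2) k_def algebra_simps)
  also have "\<dots> = y - of_real d" by (simp add: m of_real_def)
  finally have e: "(g * r) * (g * r) = y - of_real d" .
  have "adj (g * r) = g * r" using r(1) posc_sa[OF g(1)] gr by (simp add: adj_mult)
  then have "posc ((g * r) * (g * r))" by (rule sq_posc)
  then show ?thesis using e m0 by (simp add: d_def)
qed

lemma posc_mono:
  fixes y :: "'a::cstar_algebra"
  assumes py: "posc y" and pT: "posc (of_real T - y)"
  shows "norm y \<le> T"
proof -
  obtain w where w: "posc w" "w * w = y" "\<And>z. z * y = y * z \<Longrightarrow> z * w = w * z"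
    using sqrt_posc[OF py] by blast
  obtain v where v: "posc v" "v * v = of_real T - y" "\<And>z. z * (of_real T - y) = (of_real T - y) * z \<Longrightarrow> z * v = v * z"
    using sqrt_posc[OF pT] by blast
  have wy: "w * y = y * w" using w(2) by (metis mult.assoc)
  have wv: "w * v = v * w"
    using v(3)[of w] wy by (simp add: algebra_simps of_real_comm)
  have sw: "adj w = w" and sv: "adj v = v" using w(1) v(1) by (simp_all add: posc_sa)
  define u where "u = w + J v"
  have adju: "adj u = w - J v" by (simp add: u_def adj_add adj_J sw sv)
  have "adj u * u = (w - J v) * (w + J v)" unfolding adju by (simp add: u_def)
  also have "\<dots> = w * w + w * J v - J v * w - J v * J v" by (simp add: algebra_simps)
  also have "\<dots> = w * w + J (w * v) - J (v * w) - J (J (v * v))"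
    by (simp only: J_mult_left J_mult_right)
  also have "\<dots> = of_real T" by (simp add: wv J_J w(2) v(2))
  finally have uu: "adj u * u = of_real T" .
  have nu: "(norm u)^2 = \<bar>T\<bar>" using cstar_identity[of u] uu by simp
  have "w + w = u + adj u" unfolding adju by (simp add: u_def)
  then have a: "norm (w + w) \<le> norm u + norm (adj u)" using norm_triangle_ineq[of u "adj u"] by simp
  have b: "norm (w + w) = 2 * norm w" using norm_scaleR[of 2 w] by (simp add: scaleR_2)
  from a b have "2 * norm w \<le> norm u + norm (adj u)" by simp
  then have "norm w \<le> norm u" by simp
  then have "(norm w)^2 \<le> (norm u)^2" by (simp add: power_mono)
  moreover have "norm y = (norm w)^2" using cstar_sa[OF sw] w(2) by simp
  ultimately have "norm y \<le> \<bar>T\<bar>" using nu by simp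
  moreover have "T \<ge> 0"
  proof (rule ccontr)
    assume "\<not> T \<ge> 0"
    then have "norm y \<le> - T" using \<open>norm y \<le> \<bar>T\<bar>\<close> by simp
    have "posc (of_real T - y + y)" using posc_add[OF pT py] .
    then have "posc (of_real T :: 'a)" by simp
    then have "norm (of_real (norm (of_real T::'a)) - (of_real T :: 'a)) \<le> norm (of_real T :: 'a)"
      by (rule posc_normchar)
    moreover have "norm (of_real (norm (of_real T::'a)) - (of_real T :: 'a)) = \<bar>\<bar>T\<bar> - T\<bar>"
      by (metis norm_of_real of_real_diff)
    ultimately show False using \<open>\<not> T \<ge> 0\<close> by simp
  qed
  ultimately show ?thesis by simp
qed

lemma posc_norm1_noninv:
  fixes w :: "'a::cstar_algebra"
  assumes pw: "posc w" and nw: "norm w = 1" and m: "(1 - w) * m = 1" "m * (1 - w) = 1"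
  shows False
proof -
  have p1: "posc (1 - w)" using pw nw
    by (auto simp: posc_def intro!: exI[of _ 1])
  from posc_inv_gap[OF p1 m] have m0: "m \<noteq> 0" and gap: "posc (1 - w - of_real (1 / norm m))" by auto
  have "norm (of_real (norm w) - w) \<le> norm w" by (rule posc_normchar[OF pw])
  then have n1w: "norm (1 - w) \<le> 1" using nw by simp
  have "1 = norm ((1 - w) * m)" using m by simp
  also have "\<dots> \<le> norm (1 - w) * norm m" by (rule norm_mult_ineq)
  also have "\<dots> \<le> norm m" using n1w by (simp add: mult_left_le_one_le)
  finally have "1 \<le> norm m" .
  have eqg: "1 - w - of_real (1 / norm m) = of_real (1 - 1 / norm m) - w"
    by (simp add: algebra_simps)
  have "norm w \<le> 1 - 1 / norm m" using posc_mono[OF pw, of "1 - 1 / norm m"] gap unfolding eqg by simp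
  then show False using nw m0 by simp
qed

lemma posc_closed:
  fixes f :: "nat \<Rightarrow> 'a::cstar_algebra"
  assumes lim: "f \<longlonglongrightarrow> y" and p: "\<And>n. posc (f n)"
  shows "posc y"
proof -
  have "(\<lambda>n. adj (f n)) \<longlonglongrightarrow> adj y"
    using bounded_linear.tendsto[OF bounded_linear_adj lim] .
  moreover have "(\<lambda>n. adj (f n)) = f" using p by (simp add: posc_sa)
  ultimately have "adj y = y" using lim LIMSEQ_unique by auto
  moreover have "norm (of_real (norm y) - y) \<le> norm y"
  proof (rule tendsto_le[OF trivial_limit_sequentially])
    show "(\<lambda>n. norm (of_real (norm (f n)) - f n)) \<longlonglongrightarrow> norm (of_real (norm y) - (y::'a))"
      by (intro tendsto_intros lim)
    show "(\<lambda>n. norm (f n)) \<longlonglongrightarrow> norm y" by (intro tendsto_intros lim)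
    show "\<forall>\<^sub>F n in sequentially. norm (of_real (norm (f n)) - f n) \<le> norm (f n)"
      using p posc_normchar by (auto intro!: always_eventually)
  qed
  ultimately show ?thesis by (simp add: posc_iff)
qed



lemma comm3_sq:
  fixes a b c :: "'a::semigroup_mult"
  assumes "a * b = b * a" "a * c = c * a" "b * c = c * b"
  shows "(a * b * c) * (a * b * c) = (a * a) * (b * b) * (c * c)"
proof -
  have ca: "c * (a * X) = a * (c * X)" for X by (metis assms(2) mult.assoc)
  have cb: "c * (b * X) = b * (c * X)" for X by (metis assms(3) mult.assoc)
  have ba: "b * (a * X) = a * (b * X)" for X by (metis assms(1) mult.assoc)
  have cb': "c * b = b * c" using assms(3) by simp
  show ?thesis by (simp add: mult.assoc ca cb ba cb')
qed

lemma comm3_rev: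
  fixes a b c :: "'a::semigroup_mult"
  assumes "a * b = b * a" "a * c = c * a" "b * c = c * b"
  shows "c * b * a = a * b * c"
  by (metis assms mult.assoc)

lemma push_through_inv:
  fixes a b M :: "'a::ring_1"
  assumes "(1 + b * a) * M = 1" "M * (1 + b * a) = 1"
  shows "(1 + a * b) * (1 - a * M * b) = 1" "(1 - a * M * b) * (1 + a * b) = 1"
proof -
  have "(1 + a * b) * (1 - a * M * b) = 1 + a * b - a * ((1 + b * a) * M) * b"
    by (simp add: algebra_simps)
  then show "(1 + a * b) * (1 - a * M * b) = 1" using assms(1) by simp
  have "(1 - a * M * b) * (1 + a * b) = 1 + a * b - a * (M * (1 + b * a)) * b"
    by (simp add: algebra_simps)
  then show "(1 - a * M * b) * (1 + a * b) = 1" using assms(2) by simp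
qed

lemma posc_adj_mult: "posc (adj b * (b::'a::cstar_algebra))"
proof -
  define h where "h = adj b * b"
  have sh: "adj h = h" by (simp add: h_def adj_mult adj_adj)
  obtain p where p: "posc p" "p * p = h * h" "\<And>z. z * (h * h) = (h * h) * z \<Longrightarrow> z * p = p * z"
    using sqrt_posc[OF sq_posc[OF sh]] by blast
  have hp: "h * p = p * h" using p(3)[of h] by (simp add: mult.assoc)
  have sp: "adj p = p" using p(1) by (rule posc_sa)
  define z where "z = (1/2) *\<^sub>R (p - h)"
  have sz: "adj z = z" by (simp add: z_def sp sh)
  have zp: "z * p = p * z" by (simp add: z_def algebra_simps hp)
  have h2z: "h = p - 2 *\<^sub>R z" by (simp add: z_def)
  have zz: "z * z = p * z"
  proof -
    have "(p - h) * (p - h) = 2 *\<^sub>R (p * (p - h))"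
      by (simp add: algebra_simps p(2) hp scaleR_2)
    then show ?thesis by (simp add: z_def)
  qed
  \<comment> \<open>z is positive, by approximation\<close>
  define e where "e n = inverse (real (Suc n))" for n
  have ep: "e n > 0" for n by (simp add: e_def)
  have "\<forall>n. \<exists>m. (p + of_real (e n)) * m = 1 \<and> m * (p + of_real (e n)) = 1 \<and> norm m \<le> 1 / e n \<and>
             (\<forall>z. z * p = p * z \<longrightarrow> z * m = m * z)"
    using posc_plus_inv[OF p(1) ep] by blast
  then obtain M where M: "\<And>n. (p + of_real (e n)) * M n = 1" "\<And>n. M n * (p + of_real (e n)) = 1"
     "\<And>n. norm (M n) \<le> 1 / e n" "\<And>n z. z * p = p * z \<Longrightarrow> z * M n = M n * z"
    unfolding choice_iff by metis
  define f where "f n = z * z * M n" for n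
  have pf: "posc (f n)" for n
  proof -
    let ?y = "p + of_real (e n)"
    have py: "posc ?y" using posc_add[OF p(1) posc_of_real[of "e n"]] ep[of n] by simp
    have sy: "adj ?y = ?y" using posc_sa[OF py] .
    obtain g where g: "posc g" "g * g = ?y" "\<And>w. w * ?y = ?y * w \<Longrightarrow> w * g = g * w"
      using sqrt_posc[OF py] by blast
    have zg: "z * g = g * z" using g(3)[of z] zp by (simp add: algebra_simps of_real_comm)
    have mg: "M n * g = g * M n" using g(3)[of "M n"] M(1)[of n] M(2)[of n] by simp
    have zm: "z * M n = M n * z" using M(4)[OF zp] .
    have am: "adj (M n) = M n" using adj_inverse[OF sy M(1) M(2)] .
    have sg: "adj g = g" using posc_sa[OF g(1)] .
    define q where "q = z * g * M n"
    have "q * q = (z * z) * (g * g) * (M n * M n)"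
      unfolding q_def by (rule comm3_sq[OF zg zm mg[symmetric]])
    also have "\<dots> = (z * z) * ((?y * M n) * M n)" by (simp add: g(2) mult.assoc)
    also have "\<dots> = f n" by (simp add: M(1) f_def)
    finally have qq: "q * q = f n" .
    have "adj q = M n * g * z" by (simp add: q_def adj_mult am sg sz mult.assoc)
    also have "\<dots> = q" unfolding q_def by (rule comm3_rev[OF zg zm mg[symmetric]])
    finally have "adj q = q" .
    then show ?thesis using sq_posc qq by metis
  qed
  have bound: "norm (f n - z) \<le> sqrt (2 * norm z * e n)" for n
  proof -
    let ?m = "M n"
    have zm: "z * ?m = ?m * z" using M(4)[OF zp] .
    have pm: "p * ?m = ?m * p" using M(4)[of p] by simp
    have am: "adj ?m = ?m" using adj_inverse[of "p + of_real (e n)", OF _ M(1) M(2)] sp by (simp add: adj_add)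
    have "z = z * ((p + of_real (e n)) * ?m)" by (simp add: M(1))
    also have "\<dots> = (z * p) * ?m + e n *\<^sub>R (z * ?m)" by (simp add: algebra_simps of_real_def)
    also have "z * p = z * z" by (simp add: zp zz)
    finally have "z - f n = e n *\<^sub>R (z * ?m)" unfolding f_def by (metis add_diff_cancel_left')
    then have nfz: "norm (f n - z) = e n * norm (z * ?m)"
      using ep[of n] by (metis norm_minus_commute norm_scaleR abs_of_pos)
    have "(norm (z * ?m))^2 = norm (adj (z * ?m) * (z * ?m))" by (simp add: cstar_identity)
    also have "adj (z * ?m) * (z * ?m) = z * (p * ?m) * ?m"
    proof -
      have "adj (z * ?m) * (z * ?m) = ?m * (z * z) * ?m" by (simp add: adj_mult am sz mult.assoc)
      also have "\<dots> = ?m * (z * p) * ?m" by (simp add: zz zp)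
      also have "\<dots> = (?m * z) * p * ?m" by (simp add: mult.assoc)
      also have "\<dots> = (z * ?m) * p * ?m" by (simp only: zm)
      also have "\<dots> = z * (?m * p) * ?m" by (simp only: mult.assoc)
      also have "\<dots> = z * (p * ?m) * ?m" by (simp add: pm)
      finally show ?thesis .
    qed
    also have "norm (z * (p * ?m) * ?m) \<le> norm z * norm (p * ?m) * norm ?m"
    proof -
      have "norm (z * (p * ?m) * ?m) \<le> norm (z * (p * ?m)) * norm ?m" by (rule norm_mult_ineq)
      also have "\<dots> \<le> norm z * norm (p * ?m) * norm ?m"
        by (rule mult_right_mono[OF norm_mult_ineq norm_ge_zero])
      finally show ?thesis .
    qed
    also have "norm (p * ?m) \<le> 2"
    proof -
      have "p * ?m = 1 - e n *\<^sub>R ?m" using M(1)[of n] by (simp add: algebra_simps of_real_def)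
      then have "norm (p * ?m) \<le> 1 + e n * norm ?m"
        using norm_triangle_ineq4[of 1 "e n *\<^sub>R ?m"] ep[of n] by simp
      also have "e n * norm ?m \<le> 1" using M(3)[of n] ep[of n] by (simp add: field_simps)
      finally show ?thesis by simp
    qed
    then have "norm z * norm (p * ?m) * norm ?m \<le> norm z * 2 * (1 / e n)"
      using M(3)[of n] by (intro mult_mono) (auto intro: mult_left_mono)
    finally have "(norm (z * ?m))^2 \<le> norm z * 2 * (1 / e n)" .
    then have "e n ^ 2 * (norm (z * ?m))^2 \<le> e n ^ 2 * (norm z * 2 * (1 / e n))"
      by (rule mult_left_mono) simp
    then have "(e n * norm (z * ?m))^2 \<le> e n ^ 2 * (norm z * 2 * (1 / e n))"
      by (simp only: power_mult_distrib)
    also have "\<dots> = 2 * norm z * e n" using ep[of n] by (simp add: power2_eq_square field_simps)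
    finally show ?thesis unfolding nfz by (rule real_le_rsqrt)
  qed
  have "(\<lambda>n. inverse (real (Suc n))) \<longlonglongrightarrow> 0" by (rule LIMSEQ_inverse_real_of_nat)
  then have "(\<lambda>n. 2 * norm z * e n) \<longlonglongrightarrow> 2 * norm z * 0" unfolding e_def by (rule tendsto_mult_left)
  then have "(\<lambda>n. sqrt (2 * norm z * e n)) \<longlonglongrightarrow> sqrt (2 * norm z * 0)" by (rule tendsto_real_sqrt)
  then have g0: "(\<lambda>n. sqrt (2 * norm z * e n)) \<longlonglongrightarrow> 0" by simp
  have "(\<lambda>n. f n - z) \<longlonglongrightarrow> 0"
    by (rule Lim_null_comparison[of "\<lambda>n. f n - z" "\<lambda>n. sqrt (2 * norm z * e n)", OF always_eventually g0])
       (use bound in blast)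
  then have "(\<lambda>n. f n - z + z) \<longlonglongrightarrow> 0 + z" by (intro tendsto_intros)
  then have "f \<longlonglongrightarrow> z" by simp
  then have pz: "posc z" using pf by (rule posc_closed)
  define c where "c = b * z"
  have cc: "adj c * c = - (z * z * z)"
  proof -
    have "adj c * c = z * h * z" by (simp add: c_def adj_mult sz h_def mult.assoc)
    also have "\<dots> = z * (p * z) - 2 *\<^sub>R (z * z * z)" by (simp add: h2z algebra_simps)
    also have "z * (p * z) = z * z * z" by (simp add: zz[symmetric] mult.assoc)
    finally show ?thesis by (simp add: scaleR_2)
  qed
  have pzzz: "posc (z * z * z)"
  proof -
    obtain r where r: "adj r = r" "r * r = z" using posc_sqrt_sa[OF pz] by blast
    have "z * z * z = (r * r * r) * (r * r * r)" by (simp add: r(2)[symmetric] mult.assoc)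
    moreover have "adj (r * r * r) = r * r * r" by (simp add: adj_mult r(1) mult.assoc)
    ultimately show ?thesis using sq_posc by metis
  qed
  have pcc: "posc (c * adj c)"
  proof -
    define x where "x = (1/2) *\<^sub>R (c + adj c)"
    define y where "y = (1/2) *\<^sub>R J (adj c - c)"
    have sx: "adj x = x" by (simp add: x_def adj_add adj_adj add.commute)
    have sy: "adj y = y" by (simp add: y_def adj_J adj_adj J_diff)
    have jj: "J (adj c - c) * J (adj c - c) = - ((adj c - c) * (adj c - c))"
      by (simp only: J_mult_left J_mult_right J_J)
    have xx: "x * x = (1/4) *\<^sub>R ((c + adj c) * (c + adj c))" by (simp add: x_def)
    have yy: "y * y = (1/4) *\<^sub>R (- ((adj c - c) * (adj c - c)))" by (simp add: y_def jj)
    have ab: "(c + adj c) * (c + adj c) + - ((adj c - c) * (adj c - c)) = 2 *\<^sub>R (c * adj c + adj c * c)"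
      by (simp add: algebra_simps scaleR_2)
    have "x * x + y * y = (1/4) *\<^sub>R ((c + adj c) * (c + adj c) + - ((adj c - c) * (adj c - c)))"
      unfolding xx yy by (simp only: scaleR_add_right)
    also have "\<dots> = (1/2) *\<^sub>R (c * adj c + adj c * c)" unfolding ab by simp
    finally have s2: "2 *\<^sub>R (x * x + y * y) = c * adj c + adj c * c" by simp
    have "c * adj c = 2 *\<^sub>R (x * x + y * y) - adj c * c" unfolding s2 by simp
    also have "\<dots> = 2 *\<^sub>R (x * x) + 2 *\<^sub>R (y * y) + z * z * z"
      unfolding cc by (simp add: scaleR_add_right)
    finally have "c * adj c = 2 *\<^sub>R (x * x) + 2 *\<^sub>R (y * y) + z * z * z" .
    then show ?thesis
      by (simp add: posc_add posc_scaleR sq_posc sx sy pzzz)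
  qed
  have z3: "z * z * z = 0"
  proof (rule ccontr)
    assume nz: "z * z * z \<noteq> 0"
    define nn where "nn = norm (z * z * z)"
    have nnp: "nn > 0" using nz by (simp add: nn_def)
    define W where "W = (1 / nn) *\<^sub>R (z * z * z)"
    have pW: "posc W" using pzzz nnp by (simp add: W_def posc_scaleR)
    have nW: "norm W = 1" using nnp by (simp add: W_def nn_def)
    define c' where "c' = (1 / sqrt nn) *\<^sub>R c"
    have c1: "adj c' * c' = - W" using nnp by (simp add: c'_def W_def cc)
    have c2: "c' * adj c' = (1 / nn) *\<^sub>R (c * adj c)" using nnp by (simp add: c'_def)
    have "posc (c' * adj c')" using pcc nnp by (simp add: c2 posc_scaleR)
    then obtain mm where mm: "(c' * adj c' + of_real 1) * mm = 1" "mm * (c' * adj c' + of_real 1) = 1"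
      using posc_plus_inv[of "c' * adj c'" 1] by auto
    have mm': "(1 + c' * adj c') * mm = 1" "mm * (1 + c' * adj c') = 1" using mm by (simp_all add: add.commute)
    from push_through_inv[OF mm'] have
      "(1 + adj c' * c') * (1 - adj c' * mm * c') = 1" "(1 - adj c' * mm * c') * (1 + adj c' * c') = 1" .
    then have "(1 - W) * (1 - adj c' * mm * c') = 1" "(1 - adj c' * mm * c') * (1 - W) = 1"
      by (simp_all add: c1)
    then show False using posc_norm1_noninv[OF pW nW] by blast
  qed
  have "z = 0"
  proof -
    have "(z * z) * (z * z) = z * (z * z * z)" by (simp add: mult.assoc)
    then have "(z * z) * (z * z) = 0" by (simp add: z3)
    moreover have "adj (z * z) = z * z" by (simp add: adj_mult sz)
    ultimately have "norm (z * z) = 0" using cstar_sa[of "z * z"] by simp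
    then show ?thesis using cstar_sa[OF sz] by simp
  qed
  then have "h = p" using h2z by simp
  then show ?thesis using p(1) by (simp add: h_def)
qed



lemma cpos_iff_posc: "cpos a \<longleftrightarrow> posc (a::'a::cstar_algebra)"
proof
  assume "cpos a" then obtain b where "a = adj b * b" by (auto simp: cpos_def)
  then show "posc a" using posc_adj_mult by simp
next
  assume "posc a" then obtain w where "adj w = w" "w * w = a" using posc_sqrt_sa by blast
  then show "cpos a" unfolding cpos_def by metis
qed

lemma cle_iff: "cle a b \<longleftrightarrow> posc (b - (a::'a::cstar_algebra))"
  by (simp add: cle_def cpos_iff_posc)

lemma cle_refl: "cle a (a::'a::cstar_algebra)"
  by (simp add: cle_iff posc_0)

lemma cle_trans: "cle a b \<Longrightarrow> cle b c \<Longrightarrow> cle a (c::'a::cstar_algebra)"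
proof -
  assume "cle a b" "cle b c"
  then have "posc ((c - b) + (b - a))" by (intro posc_add) (simp_all add: cle_iff)
  then show ?thesis by (simp add: cle_iff)
qed

lemma cle_add: "cle a b \<Longrightarrow> cle c d \<Longrightarrow> cle (a + c) (b + (d::'a::cstar_algebra))"
proof -
  assume "cle a b" "cle c d"
  then have "posc ((b - a) + (d - c))" by (intro posc_add) (simp_all add: cle_iff)
  then show ?thesis by (simp add: cle_iff algebra_simps)
qed

lemma cle_congr: "cle a b \<Longrightarrow> cle (adj x * a * x) (adj x * b * (x::'a::cstar_algebra))"
proof -
  assume "cle a b"
  then obtain g where g: "b - a = adj g * g" by (auto simp: cle_def cpos_def)
  have "adj x * b * x - adj x * a * x = adj x * (b - a) * x" by (simp add: algebra_simps)
  also have "\<dots> = adj (g * x) * (g * x)" by (simp add: g adj_mult mult.assoc)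
  finally show ?thesis by (auto simp: cle_def cpos_def)
qed

lemma cle_norm: "adj h = h \<Longrightarrow> norm h \<le> l \<Longrightarrow> cle h (of_real l :: 'a::cstar_algebra)"
proof -
  assume a: "adj h = h" "norm h \<le> l"
  have "posc (of_real l - h)"
    unfolding posc_def using a order_trans[OF norm_ge_zero[of h] a(2)] by (auto intro!: exI[of _ l])
  then show ?thesis by (simp add: cle_iff)
qed

lemma cle_of_real: "l1 \<le> l2 \<Longrightarrow> cle (of_real l1) (of_real l2 :: 'a::cstar_algebra)"
  using posc_of_real[of "l2 - l1"] by (simp add: cle_iff)

lemma cgt0_gap: "cgt0 e \<Longrightarrow> \<exists>d>0. cle (of_real d) (e::'a::cstar_algebra)"
proof -
  assume "cgt0 e"
  then obtain y where pe: "posc e" and y: "e * y = 1" "y * e = 1"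
    by (auto simp: cgt0_def cinvertible_def cpos_iff_posc)
  from posc_inv_gap[OF pe y] have "y \<noteq> 0" "posc (e - of_real (1 / norm y))" by auto
  then show ?thesis by (intro exI[of _ "1 / norm y"]) (simp add: cle_iff)
qed

lemma cle_norm_bound: "cle 0 u \<Longrightarrow> cle u (of_real l) \<Longrightarrow> norm u \<le> (l::real)"
  for u :: "'a::cstar_algebra"
  by (rule posc_mono) (simp_all add: cle_iff)

lemma cle_sa: "cle 0 u \<Longrightarrow> adj u = (u::'a::cstar_algebra)"
  by (simp add: cle_iff posc_sa)



declare cle_trans[trans]

lemma geom_tail:
  fixes q :: real
  assumes "0 \<le> q" "q < 1"
  shows "(\<Sum>i\<in>{p..<n}. q ^ i) \<le> q ^ p / (1 - q)"
proof (cases "p \<le> n")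
  case True
  have "(\<Sum>i\<in>{p..<n}. q ^ i) = (\<Sum>i<n - p. q ^ (p + i))"
    using True by (intro sum.reindex_bij_witness[of _ "\<lambda>i. p + i" "\<lambda>i. i - p"]) auto
  also have "\<dots> = q ^ p * (\<Sum>i<n - p. q ^ i)" by (simp add: power_add sum_distrib_left)
  also have "(\<Sum>i<n - p. q ^ i) = (1 - q ^ (n - p)) / (1 - q)" using assms by (simp add: sum_gp_strict)
  also have "\<dots> \<le> 1 / (1 - q)" using assms by (simp add: divide_right_mono)
  finally show ?thesis using assms by (simp add: mult_left_mono)
qed (use assms in simp)

theorem mainTheorem3:
  fixes d :: "'x \<Rightarrow> 'x \<Rightarrow> 'a::cstar_algebra"
    and T :: "'x \<Rightarrow> 'x" and x :: 'x and a :: 'a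
  assumes "casym_metric d"
    and "fwd_complete d"
    and "norm a < 1"
    and "\<forall>y\<in>orbit T x. cle (d (T y) (T (T y))) (adj a * d y (T y) * a)"
  shows "\<exists>x0. fwd_converges d (\<lambda>n. (T ^^ n) x) x0 \<and>
           (T x0 = x0 \<longleftrightarrow> fwd_orbital_lsc d T x (\<lambda>z. d z (T z)) x0)"
proof -
  note dm = assms(1)[unfolded casym_metric_def]
  have pos: "cle 0 (d u v)" for u v using dm by blast
  have tri: "cle (d u v) (d u w + d w v)" for u v w using dm by blast
  have zero: "d u v = 0 \<longleftrightarrow> u = v" for u v using dm by blast
  define xs where "xs n = (T ^^ n) x" for n
  have xsS: "T (xs n) = xs (Suc n)" for n by (simp add: xs_def)
  have orb: "xs n \<in> orbit T x" for n by (auto simp: xs_def orbit_def)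
  define D where "D n = d (xs n) (xs (Suc n))" for n
  define d0 where "d0 = D 0"
  define B where "B n = adj (a ^ n) * d0 * a ^ n" for n
  have sd0: "adj d0 = d0" using cle_sa[OF pos] by (simp add: d0_def D_def)
  have sB: "adj (B n) = B n" for n by (simp add: B_def adj_mult sd0 adj_adj mult.assoc)
  have DB: "cle (D n) (B n)" for n
  proof (induction n)
    case 0
    then show ?case by (simp add: B_def d0_def cle_refl)
  next
    case (Suc n)
    have "cle (d (T (xs n)) (T (T (xs n)))) (adj a * d (xs n) (T (xs n)) * a)"
      using assms(4) orb[of n] by blast
    then have "cle (D (Suc n)) (adj a * D n * a)" by (simp add: D_def xsS)
    also have "cle (adj a * D n * a) (adj a * B n * a)" using Suc by (rule cle_congr)
    also have "adj a * B n * a = B (Suc n)"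
      by (simp add: B_def adj_mult adj_power power_Suc2 mult.assoc power_commutes)
    finally show ?case .
  qed
  define q where "q = (norm a)^2"
  have q0: "0 \<le> q" and q1: "q < 1" using assms(3) by (auto simp: q_def power_less_one_iff abs_square_less_1)
  have nB: "norm (B n) \<le> norm d0 * q ^ n" for n
  proof -
    have "norm (B n) \<le> norm (adj (a ^ n) * d0) * norm (a ^ n)" unfolding B_def by (rule norm_mult_ineq)
    also have "\<dots> \<le> (norm (a ^ n) * norm d0) * norm (a ^ n)"
      by (intro mult_right_mono) (auto simp: norm_mult_ineq[of "adj (a^n)", simplified])
    also have "\<dots> = norm d0 * (norm (a ^ n))^2" by (simp add: power2_eq_square)
    also have "\<dots> \<le> norm d0 * ((norm a)^n)^2"
      by (intro mult_left_mono power_mono norm_power_ineq) auto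
    also have "\<dots> = norm d0 * q ^ n" by (simp add: q_def power_mult[symmetric] power_mult_distrib mult.commute)
    finally show ?thesis .
  qed
  define K where "K = norm d0 / (1 - q)"
  have K0: "K \<ge> 0" using q1 by (simp add: K_def)
  define S where "S p n = (\<Sum>i\<in>{p..<n}. B i)" for p n
  have dS: "cle (d (xs p) (xs (p + Suc k))) (S p (p + Suc k))" for p k
  proof (induction k)
    case 0
    then show ?case using DB[of p] by (simp add: S_def D_def)
  next
    case (Suc k)
    have "cle (d (xs p) (xs (p + Suc (Suc k)))) (d (xs p) (xs (p + Suc k)) + d (xs (p + Suc k)) (xs (p + Suc (Suc k))))"
      by (rule tri)
    also have "cle \<dots> (S p (p + Suc k) + B (p + Suc k))"
      using Suc DB[of "p + Suc k"] by (intro cle_add) (simp_all add: D_def)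
    also have "S p (p + Suc k) + B (p + Suc k) = S p (p + Suc (Suc k))"
      by (simp add: S_def)
    finally show ?case .
  qed
  have sS: "adj (S p n) = S p n" for p n by (simp add: S_def adj_sum sB)
  have nS: "norm (S p n) \<le> K * q ^ p" for p n
  proof -
    have "norm (S p n) \<le> (\<Sum>i\<in>{p..<n}. norm (B i))" unfolding S_def by (rule norm_sum)
    also have "\<dots> \<le> (\<Sum>i\<in>{p..<n}. norm d0 * q ^ i)" by (intro sum_mono nB)
    also have "\<dots> = norm d0 * (\<Sum>i\<in>{p..<n}. q ^ i)" by (simp add: sum_distrib_left)
    also have "\<dots> \<le> norm d0 * (q ^ p / (1 - q))" by (intro mult_left_mono geom_tail q0 q1) simp
    also have "\<dots> = K * q ^ p" by (simp add: K_def)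
    finally show ?thesis .
  qed
  have qlim: "(\<lambda>p. K * q ^ p) \<longlonglongrightarrow> K * 0"
    using q0 q1 by (intro tendsto_mult_left LIMSEQ_power_zero) simp
  have cauchy: "fwd_cauchy d xs"
    unfolding fwd_cauchy_def
  proof (intro allI impI)
    fix e :: 'a assume "cgt0 e"
    then obtain dl where dl: "dl > 0" "cle (of_real dl) e" using cgt0_gap by blast
    from qlim dl(1) have "eventually (\<lambda>p. K * q ^ p < dl) sequentially"
      by (simp add: order_tendstoD)
    then obtain k where k: "K * q ^ k < dl" by (auto simp: eventually_sequentially)
    show "\<exists>k. \<forall>n p. k \<le> p \<and> p < n \<longrightarrow> cle (d (xs p) (xs n)) e"
    proof (intro exI[of _ k] allI impI)
      fix n p assume np: "k \<le> p \<and> p < n"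
      then obtain j where nj: "n = p + Suc j" by (metis add_Suc_right less_iff_Suc_add)
      have "cle (d (xs p) (xs n)) (S p n)" using dS[of p j] nj by simp
      also have "cle (S p n) (of_real (norm (S p n)))" by (rule cle_norm[OF sS]) simp
      also have "cle (of_real (norm (S p n))) (of_real dl :: 'a)"
      proof (rule cle_of_real)
        have "q ^ p \<le> q ^ k" using np q0 q1 by (intro power_decreasing) auto
        then have "K * q ^ p \<le> K * q ^ k" using K0 by (rule mult_left_mono)
        then show "norm (S p n) \<le> dl" using nS[of p n] k by linarith
      qed
      also have "cle (of_real dl) e" by (rule dl(2))
      finally show "cle (d (xs p) (xs n)) e" .
    qed
  qed
  then obtain x0 where conv: "fwd_converges d xs x0" using assms(2) by (auto simp: fwd_complete_def)
  have nD: "norm (D n) \<le> norm d0 * q ^ n" for n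
  proof -
    have "cle (D n) (of_real (norm (B n)))"
      using DB[of n] cle_norm[OF sB order_refl] by (rule cle_trans)
    then have "norm (D n) \<le> norm (B n)" using pos by (intro cle_norm_bound) (simp_all add: D_def)
    then show ?thesis using nB[of n] by linarith
  qed
  have Dlim: "(\<lambda>n. norm (D n)) \<longlonglongrightarrow> 0"
  proof (rule Lim_null_comparison[OF always_eventually])
    show "\<forall>n. norm (norm (D n)) \<le> norm d0 * q ^ n" using nD by simp
    show "(\<lambda>n. norm d0 * q ^ n) \<longlonglongrightarrow> 0"
      using q0 q1 tendsto_mult_left[OF LIMSEQ_power_zero[of q], of "norm d0"] by simp
  qed
  have iff: "T x0 = x0 \<longleftrightarrow> fwd_orbital_lsc d T x (\<lambda>z. d z (T z)) x0"
  proof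
    assume fx: "T x0 = x0"
    show "fwd_orbital_lsc d T x (\<lambda>z. d z (T z)) x0"
      unfolding fwd_orbital_lsc_def
    proof (intro allI impI)
      fix ys :: "nat \<Rightarrow> 'x"
      have "ereal (norm (d x0 (T x0))) = 0" using fx zero by simp
      also have "0 \<le> liminf (\<lambda>n. ereal (norm (d (ys n) (T (ys n)))))"
        by (intro Liminf_bounded always_eventually) simp
      finally show "ereal (norm (d x0 (T x0))) \<le> liminf (\<lambda>n. ereal (norm (d (ys n) (T (ys n)))))" .
    qed
  next
    assume "fwd_orbital_lsc d T x (\<lambda>z. d z (T z)) x0"
    then have "ereal (norm (d x0 (T x0))) \<le> liminf (\<lambda>n. ereal (norm (d (xs n) (T (xs n)))))"
      using orb conv unfolding fwd_orbital_lsc_def by blast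
    also have "(\<lambda>n. ereal (norm (d (xs n) (T (xs n))))) = (\<lambda>n. ereal (norm (D n)))"
      by (simp add: D_def xsS)
    also have "liminf (\<lambda>n. ereal (norm (D n))) = ereal 0"
      by (intro lim_imp_Liminf trivial_limit_sequentially) (simp add: Dlim)
    finally have "norm (d x0 (T x0)) \<le> 0" by simp
    then have "d x0 (T x0) = 0" by simp
    then show "T x0 = x0" using zero by simp
  qed
  show ?thesis using conv iff unfolding xs_def by blast
qed


end
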